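(* Let $k\ge 2$, let $\alpha\in(0,1)$, let $n$ be large, and let $H$ be a graph in $\mathrm{SPEX}(n, C_{2k+2})$ or in $\mathrm{SPEX}(n,\{C_{2k+1},C_{2k+2}\})$, with Perron vector $\mathrm{v}$ normalized so that $\max_u \mathrm{v}_u = 1$. Let $L=\{u : \mathrm{v}_u>\alpha\}$ and $M=\{u : \mathrm{v}_u \ge \alpha/3\}$. Then $$|L| \leq \frac{16k^{1/2}n^{(k+3)/(2k+2)}}{\alpha}\quad\text{and}\quad |M| \leq \frac{48k^{1/2}n^{(k+3)/(2k+2)}}{\alpha}.$$
   Context: $\mathrm{SPEX}(n,\mathcal{F})$ is the set of $n$-vertex graphs with no subgraph in $\mathcal{F}$ whose adjacency spectral radius is maximum among all such graphs. Such extremal graphs are connected, so the adjacency matrix has a unique (up to scaling) entrywise positive eigenvector for its spectral radius $\lambda(H)$, the Perron vector; $\mathrm{v}_u$ denotes its entry at vertex $u$. *)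

theory Defs
  imports Complex_Main "Jordan_Normal_Form.Spectral_Radius"
begin

definition graph_on :: "nat \<Rightarrow> (nat \<Rightarrow> nat \<Rightarrow> bool) \<Rightarrow> bool" where
  "graph_on n E \<longleftrightarrow> (\<forall>i j. E i j \<longrightarrow> i < n \<and> j < n) \<and> (\<forall>i j. E i j \<longrightarrow> E j i) \<and> (\<forall>i. \<not> E i i)"

definition contains_cycle :: "nat \<Rightarrow> (nat \<Rightarrow> nat \<Rightarrow> bool) \<Rightarrow> nat \<Rightarrow> bool" where
  "contains_cycle n E m \<longleftrightarrow> (\<exists>f. inj_on f {0..<m} \<and> f ` {0..<m} \<subseteq> {0..<n}
       \<and> (\<forall>i<m. E (f i) (f (Suc i mod m))))"

definition cycle_free :: "nat \<Rightarrow> (nat \<Rightarrow> nat \<Rightarrow> bool) \<Rightarrow> nat set \<Rightarrow> bool" where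
  "cycle_free n E F \<longleftrightarrow> (\<forall>m\<in>F. \<not> contains_cycle n E m)"

definition adj_mat :: "nat \<Rightarrow> (nat \<Rightarrow> nat \<Rightarrow> bool) \<Rightarrow> complex mat" where
  "adj_mat n E = mat n n (\<lambda>(i,j). if E i j then 1 else 0)"

definition graph_spec_radius :: "nat \<Rightarrow> (nat \<Rightarrow> nat \<Rightarrow> bool) \<Rightarrow> real" where
  "graph_spec_radius n E = spectral_radius (adj_mat n E)"

definition SPEX :: "nat \<Rightarrow> nat set \<Rightarrow> (nat \<Rightarrow> nat \<Rightarrow> bool) set" where
  "SPEX n F = {E. graph_on n E \<and> cycle_free n E F \<and>
     (\<forall>E'. graph_on n E' \<and> cycle_free n E' F \<longrightarrow> graph_spec_radius n E' \<le> graph_spec_radius n E)}"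

definition normalized_perron :: "nat \<Rightarrow> (nat \<Rightarrow> nat \<Rightarrow> bool) \<Rightarrow> (nat \<Rightarrow> real) \<Rightarrow> bool" where
  "normalized_perron n E v \<longleftrightarrow> (\<forall>u<n. v u > 0) \<and>
     (\<forall>u<n. (\<Sum>w<n. if E u w then v w else 0) = graph_spec_radius n E * v u) \<and>
     Max (v ` {0..<n}) = 1"

end

theory Submission
  imports Defs
begin

definition Kb :: "nat \<Rightarrow> nat \<Rightarrow> nat \<Rightarrow> nat \<Rightarrow> bool" where
  "Kb n k u w \<longleftrightarrow> (u < k \<and> k \<le> w \<and> w < n) \<or> (w < k \<and> k \<le> u \<and> u < n)"

lemma Kb_spec:
  assumes "1 \<le> k" "k < n"
  shows "sqrt (real k * real (n-k)) \<le> graph_spec_radius n (Kb n k)"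
proof -
  define A where "A = adj_mat n (Kb n k)"
  define s where "s = sqrt (real k * real (n-k))"
  define x where "x = vec n (\<lambda>i. complex_of_real (if i < k then sqrt (real (n-k)) else sqrt (real k)))"
  have A: "A \<in> carrier_mat n n" unfolding A_def adj_mat_def by simp
  have x: "x \<in> carrier_vec n" unfolding x_def by simp
  have ev: "A *\<^sub>v x = complex_of_real s \<cdot>\<^sub>v x"
  proof (rule eq_vecI)
    show "dim_vec (A *\<^sub>v x) = dim_vec (complex_of_real s \<cdot>\<^sub>v x)" using A x by simp
    fix i assume "i < dim_vec (complex_of_real s \<cdot>\<^sub>v x)"
    hence i: "i < n" using x by simp
    have "(A *\<^sub>v x) $ i = (\<Sum>j = 0..<n. (if Kb n k i j then 1 else 0) * x $ j)"
      using i A unfolding A_def adj_mat_def mult_mat_vec_def scalar_prod_def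
      by (simp add: x_def)
    also have "\<dots> = (\<Sum>j = 0..<n. if Kb n k i j then x $ j else 0)"
      by (rule sum.cong) auto
    also have "\<dots> = (\<Sum>j \<in> {j\<in>{0..<n}. Kb n k i j}. x $ j)"
      by (rule sum.inter_filter[symmetric]) simp
    also have "\<dots> = complex_of_real s * x $ i"
    proof (cases "i < k")
      case True
      have "{j\<in>{0..<n}. Kb n k i j} = {k..<n}" using True unfolding Kb_def by auto
      moreover have "\<forall>j\<in>{k..<n}. x $ j = complex_of_real (sqrt (real k))" by (simp add: x_def)
      ultimately have "(\<Sum>j \<in> {j\<in>{0..<n}. Kb n k i j}. x $ j) = of_nat (n-k) * complex_of_real (sqrt (real k))"
        by simp
      moreover have "s * sqrt (real (n-k)) = real (n-k) * sqrt (real k)"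
        unfolding s_def using assms by (simp add: real_sqrt_mult)
      ultimately show ?thesis using True i
        by (simp add: x_def) (metis of_real_mult of_real_of_nat_eq)
    next
      case False
      have "{j\<in>{0..<n}. Kb n k i j} = {0..<k}" using False i assms unfolding Kb_def by auto
      moreover have "\<forall>j\<in>{0..<k}. x $ j = complex_of_real (sqrt (real (n-k)))" using assms by (simp add: x_def)
      ultimately have "(\<Sum>j \<in> {j\<in>{0..<n}. Kb n k i j}. x $ j) = of_nat k * complex_of_real (sqrt (real (n-k)))"
        by simp
      moreover have "s * sqrt (real k) = real k * sqrt (real (n-k))"
        unfolding s_def using assms by (simp add: real_sqrt_mult)
      ultimately show ?thesis using False i
        by (simp add: x_def) (metis of_real_mult of_real_of_nat_eq)
    qed
    also have "\<dots> = (complex_of_real s \<cdot>\<^sub>v x) $ i" using i x by simp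
    finally show "(A *\<^sub>v x) $ i = (complex_of_real s \<cdot>\<^sub>v x) $ i" .
  qed
  have nz: "x \<noteq> 0\<^sub>v n"
  proof
    assume "x = 0\<^sub>v n"
    hence "x $ 0 = 0" using assms by simp
    moreover have "x $ 0 \<noteq> 0" using assms by (simp add: x_def)
    ultimately show False by simp
  qed
  have "eigenvalue A (complex_of_real s)"
    unfolding eigenvalue_def eigenvector_def using A x ev nz by (intro exI[of _ x]) auto
  hence "cmod (complex_of_real s) \<in> cmod ` spectrum A" unfolding spectrum_def by (intro imageI) simp
  hence "cmod (complex_of_real s) \<le> spectral_radius A"
    using spectral_radius_mem_max(2)[OF A] assms by auto
  moreover have "cmod (complex_of_real s) = s" unfolding s_def by simp
  ultimately show ?thesis unfolding graph_spec_radius_def A_def s_def by simp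
qed

definition deg :: "(nat \<Rightarrow> nat \<Rightarrow> bool) \<Rightarrow> nat set \<Rightarrow> nat \<Rightarrow> nat" where
  "deg R W v = card {w\<in>W. R v w}"

lemma deg_remove:
  assumes fin: "finite W" and sym: "\<forall>u w. R u w \<longrightarrow> R w u" and irr: "\<forall>u. \<not> R u u" and x: "x \<in> W"
  shows "(\<Sum>v\<in>W. deg R W v) = (\<Sum>v\<in>W-{x}. deg R (W-{x}) v) + 2 * deg R W x"
proof -
  have a: "(\<Sum>v\<in>W. deg R W v) = deg R W x + (\<Sum>v\<in>W-{x}. deg R W v)"
    using fin x by (simp add: sum.remove)
  have b: "deg R W v = deg R (W-{x}) v + (if R v x then 1 else 0)" if "v \<in> W - {x}" for v
  proof -
    have "{w\<in>W. R v w} = {w\<in>W-{x}. R v w} \<union> (if R v x then {x} else {})" using x by auto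
    moreover have "finite {w\<in>W-{x}. R v w}" using fin by simp
    ultimately show ?thesis unfolding deg_def by (auto simp: card_insert_if)
  qed
  have c: "(\<Sum>v\<in>W-{x}. (if R v x then 1 else 0::nat)) = deg R W x"
  proof -
    have "(\<Sum>v\<in>W-{x}. (if R v x then 1 else 0::nat)) = card {v\<in>W-{x}. R v x}"
      using fin by (simp add: sum.If_cases Int_def)
    also have "{v\<in>W-{x}. R v x} = {w\<in>W. R x w}" using sym irr by auto
    finally show ?thesis unfolding deg_def .
  qed
  have "(\<Sum>v\<in>W-{x}. deg R W v) = (\<Sum>v\<in>W-{x}. deg R (W-{x}) v) + (\<Sum>v\<in>W-{x}. (if R v x then 1 else 0::nat))"
    using b by (simp add: sum.distrib)
  with a c show ?thesis by simp
qed

lemma dense_sub: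
  fixes t :: real
  assumes "finite W" "\<forall>u w. R u w \<longrightarrow> R w u" "\<forall>u. \<not> R u u"
    "real (\<Sum>v\<in>W. deg R W v) > 2 * t * real (card W)"
  shows "\<exists>W'\<subseteq>W. W' \<noteq> {} \<and> (\<forall>v\<in>W'. real (deg R W' v) > t)"
  using assms
proof (induction "card W" arbitrary: W rule: less_induct)
  case less
  show ?case
  proof (cases "\<forall>v\<in>W. real (deg R W v) > t")
    case True
    have "W \<noteq> {}" using less.prems(4) by auto
    with True show ?thesis by blast
  next
    case False
    then obtain x where x: "x \<in> W" "real (deg R W x) \<le> t" by force
    have eq: "(\<Sum>v\<in>W. deg R W v) = (\<Sum>v\<in>W-{x}. deg R (W-{x}) v) + 2 * deg R W x"
      using deg_remove[OF less.prems(1-3) x(1)] .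
    have cW: "card W = Suc (card (W-{x}))" using card_Suc_Diff1[OF less.prems(1) x(1)] by simp
    have "real (\<Sum>v\<in>W-{x}. deg R (W-{x}) v) > 2 * t * real (card (W-{x}))"
      using less.prems(4) x(2) unfolding eq cW by (simp add: algebra_simps)
    moreover have "card (W-{x}) < card W" using cW by simp
    ultimately obtain W' where "W' \<subseteq> W-{x}" "W' \<noteq> {}" "\<forall>v\<in>W'. real (deg R W' v) > t"
      using less.hyps[of "W-{x}"] less.prems(1-3) by auto
    thus ?thesis by blast
  qed
qed

definition cutR :: "(nat \<Rightarrow> nat \<Rightarrow> bool) \<Rightarrow> nat set \<Rightarrow> nat \<Rightarrow> nat \<Rightarrow> bool" where
  "cutR R X u w \<longleftrightarrow> R u w \<and> (u \<in> X \<longleftrightarrow> w \<notin> X)"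

lemma cutR_sym: "\<forall>u w. R u w \<longrightarrow> R w u \<Longrightarrow> \<forall>u w. cutR R X u w \<longrightarrow> cutR R X w u"
  unfolding cutR_def by auto
lemma cutR_irr: "\<forall>u. \<not> cutR R X u u" unfolding cutR_def by auto

lemma flip_gain:
  assumes fin: "finite S" and sym: "\<forall>u w. R u w \<longrightarrow> R w u" and irr: "\<forall>u. \<not> R u u" and v: "v \<in> S"
  shows "(\<Sum>u\<in>S. deg (cutR R (X - {v} \<union> ({v} - X))) S u) + 4 * deg (cutR R X) S v
       = (\<Sum>u\<in>S. deg (cutR R X) S u) + 2 * deg R S v"
proof -
  define X' where "X' = X - {v} \<union> ({v} - X)"
  have s1: "(\<Sum>u\<in>S. deg (cutR R X) S u) = (\<Sum>u\<in>S-{v}. deg (cutR R X) (S-{v}) u) + 2 * deg (cutR R X) S v"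
    by (rule deg_remove[OF fin cutR_sym[OF sym] cutR_irr v])
  have s2: "(\<Sum>u\<in>S. deg (cutR R X') S u) = (\<Sum>u\<in>S-{v}. deg (cutR R X') (S-{v}) u) + 2 * deg (cutR R X') S v"
    by (rule deg_remove[OF fin cutR_sym[OF sym] cutR_irr v])
  have same: "deg (cutR R X') (S-{v}) u = deg (cutR R X) (S-{v}) u" if "u \<in> S - {v}" for u
  proof -
    have "{w\<in>S-{v}. cutR R X' u w} = {w\<in>S-{v}. cutR R X u w}"
      using that unfolding cutR_def X'_def by auto
    thus ?thesis unfolding deg_def by simp
  qed
  have dv: "deg (cutR R X') S v + deg (cutR R X) S v = deg R S v"
  proof -
    have "{w\<in>S. R v w} = {w\<in>S. cutR R X' v w} \<union> {w\<in>S. cutR R X v w}"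
      using irr unfolding cutR_def X'_def by auto
    moreover have "{w\<in>S. cutR R X' v w} \<inter> {w\<in>S. cutR R X v w} = {}"
      using irr unfolding cutR_def X'_def by auto
    ultimately show ?thesis unfolding deg_def using fin
      by (simp add: card_Un_disjoint)
  qed
  have "(\<Sum>u\<in>S-{v}. deg (cutR R X') (S-{v}) u) = (\<Sum>u\<in>S-{v}. deg (cutR R X) (S-{v}) u)"
    using same by (rule sum.cong[OF refl])
  with s1 s2 dv show ?thesis unfolding X'_def[symmetric] by linarith
qed

lemma max_cut:
  assumes fin: "finite S" and sym: "\<forall>u w. R u w \<longrightarrow> R w u" and irr: "\<forall>u. \<not> R u u"
  shows "\<exists>X. \<forall>v\<in>S. deg R S v \<le> 2 * deg (cutR R X) S v"
proof -
  define f where "f X = (\<Sum>u\<in>S. deg (cutR R X) S u)" for X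
  have "finite (f ` Pow S)" using fin by simp
  moreover have "f ` Pow S \<noteq> {}" by blast
  ultimately have "Max (f ` Pow S) \<in> f ` Pow S" by (rule Max_in)
  then obtain X where X: "X \<subseteq> S" "f X = Max (f ` Pow S)" by auto
  have mx: "f Y \<le> f X" if "Y \<subseteq> S" for Y
    using that X(2) \<open>finite (f ` Pow S)\<close> by (simp add: Max_ge)
  show ?thesis
  proof (intro exI ballI, rule ccontr)
    fix v assume v: "v \<in> S" and c: "\<not> deg R S v \<le> 2 * deg (cutR R X) S v"
    have "X - {v} \<union> ({v} - X) \<subseteq> S" using X(1) v by auto
    hence "f (X - {v} \<union> ({v} - X)) \<le> f X" by (rule mx)
    with flip_gain[OF fin sym irr v, of X] c show False unfolding f_def by linarith
  qed
qed

lemma mod_inj_range: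
  fixes N a i j :: nat
  assumes "i < N" "j < N" "(a + i) mod N = (a + j) mod N"
  shows "i = j"
proof (rule ccontr)
  assume ne: "i \<noteq> j"
  { fix i j :: nat assume ij: "i < j" "j < N" "(a + i) mod N = (a + j) mod N"
    hence "N dvd (a + j) - (a + i)" using mod_eq_dvd_iff_nat[of "a+i" "a+j" N] by simp
    hence "N dvd j - i" by simp
    moreover have "0 < j - i" "j - i < N" using ij by auto
    ultimately have False using nat_dvd_not_less by blast }
  thus False using assms ne by (metis linorder_neqE_nat)
qed

lemma cyc_col:
  fixes c :: "nat \<Rightarrow> nat" and R :: "nat \<Rightarrow> nat \<Rightarrow> bool" and col :: "nat \<Rightarrow> bool"
  assumes sym: "\<forall>u w. R u w \<longrightarrow> R w u"
    and N: "N = 2*M"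
    and cyc: "\<forall>i<N. R (c i) (c (Suc i mod N))"
    and chord: "R (c 0) (c (2*\<tau>+1))"
    and d: "1 \<le> d" "d \<le> \<tau>" "\<tau> + d < M"
    and H: "\<forall>qs. length qs = 2*d+1 \<and> distinct qs \<and> set qs \<subseteq> {..<N}
              \<and> (\<forall>j<2*d. R (c (qs!j)) (c (qs!Suc j))) \<and> even (qs!0) \<and> even (qs!(2*d))
              \<longrightarrow> col (c (qs!0)) = col (c (qs!(2*d)))"
  shows "\<forall>s<M. col (c (2*s)) = col (c 0)"
proof -
  define t where "t = 2*\<tau>+1"
  define g where "g x = col (c (2*(x mod M)))" for x
  have M0: "0 < M" using d by simp
  have cyc': "R (c i) (c (Suc i))" if "Suc i < N" for i
    using cyc that by (metis Suc_lessD mod_less)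
  have cycr: "R (c (Suc i)) (c i)" if "Suc i < N" for i
    using cyc'[OF that] sym by blast
  have G1: "g (x + d) = g x" for x
  proof -
    define a where "a = x mod M"
    have a: "a < M" unfolding a_def using M0 by simp
    define qs where "qs = map (\<lambda>j. (2*a + j) mod N) [0..<2*d+1]"
    have len: "length qs = 2*d+1" unfolding qs_def by simp
    have nth: "qs ! j = (2*a + j) mod N" if "j < 2*d+1" for j
      unfolding qs_def using that by (simp del: upt_Suc)
    have dist: "distinct qs" unfolding qs_def distinct_map
    proof
      show "distinct [0..<2*d+1]" by simp
      show "inj_on (\<lambda>j. (2*a + j) mod N) (set [0..<2*d+1])"
      proof (rule inj_onI)
        fix i j assume i: "i \<in> set [0..<2*d+1]" and j: "j \<in> set [0..<2*d+1]"
          and eq: "(2*a + i) mod N = (2*a + j) mod N"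
        have "i < N" "j < N" using i j d N by auto
        thus "i = j" using mod_inj_range eq by blast
      qed
    qed
    have st: "set qs \<subseteq> {..<N}" unfolding qs_def using M0 N by auto
    have ed: "\<forall>j<2*d. R (c (qs!j)) (c (qs!Suc j))"
    proof (intro allI impI)
      fix j assume j: "j < 2*d"
      have "R (c ((2*a+j) mod N)) (c (Suc ((2*a+j) mod N) mod N))"
        using cyc M0 N by simp
      moreover have "Suc ((2*a+j) mod N) mod N = (2*a + Suc j) mod N"
        by (simp add: mod_Suc_eq)
      ultimately show "R (c (qs!j)) (c (qs!Suc j))" using nth j by simp
    qed
    have h0: "qs!0 = 2*a" using nth a N by simp
    have hl: "qs!(2*d) = 2*((a + d) mod M)" using nth N by (simp add: mult_mod_right)
    have "col (c (qs!0)) = col (c (qs!(2*d)))"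
      using H[rule_format, of qs] len dist st ed h0 hl by simp
    moreover have "(a + d) mod M = (x + d) mod M" unfolding a_def by (simp add: mod_add_left_eq)
    ultimately show ?thesis unfolding g_def h0 hl a_def by simp
  qed
  have Gp: "g (x + M) = g x" for x unfolding g_def by simp
  have G2: "g s = g (\<tau>+1-d+s)" if s: "s < d" for s
  proof -
    define qs where "qs = map (\<lambda>j. if j \<le> 2*s then 2*s - j else t + 2*s + 1 - j) [0..<2*d+1]"
    have len: "length qs = 2*d+1" unfolding qs_def by simp
    have nth: "qs ! j = (if j \<le> 2*s then 2*s - j else t + 2*s + 1 - j)" if "j < 2*d+1" for j
      unfolding qs_def using that by (simp del: upt_Suc)
    have dist: "distinct qs" unfolding qs_def distinct_map
    proof
      show "distinct [0..<2*d+1]" by simp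
      show "inj_on (\<lambda>j. if j \<le> 2*s then 2*s - j else t + 2*s + 1 - j) (set [0..<2*d+1])"
        by (rule inj_onI) (use s d in \<open>auto simp: t_def split: if_splits\<close>)
    qed
    have st: "set qs \<subseteq> {..<N}" unfolding qs_def using d s N by (auto simp: t_def)
    have ed: "\<forall>j<2*d. R (c (qs!j)) (c (qs!Suc j))"
    proof (intro allI impI)
      fix j assume j: "j < 2*d"
      consider "j < 2*s" | "j = 2*s" | "j > 2*s" by linarith
      thus "R (c (qs!j)) (c (qs!Suc j))"
      proof cases
        case 1
        have "R (c (Suc (2*s - Suc j))) (c (2*s - Suc j))" by (rule cycr) (use 1 d N s in auto)
        moreover have "Suc (2*s - Suc j) = 2*s - j" using 1 by simp
        ultimately show ?thesis using nth j 1 by simp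
      next
        case 2
        thus ?thesis using nth j chord by (simp add: t_def)
      next
        case 3
        have "R (c (Suc (t + 2*s - j))) (c (t + 2*s - j))"
          by (rule cycr) (use 3 d N s j in \<open>auto simp: t_def\<close>)
        moreover have "Suc (t + 2*s - j) = t + 2*s + 1 - j" using 3 j d s by (simp add: t_def)
        moreover have "t + 2*s + 1 - Suc j = t + 2*s - j" by simp
        ultimately show ?thesis using nth j 3 by simp
      qed
    qed
    have h0: "qs!0 = 2*s" using nth by simp
    have hl: "qs!(2*d) = 2*(\<tau>+1-d+s)" using nth s d by (simp add: t_def)
    have "col (c (qs!0)) = col (c (qs!(2*d)))"
      using H[rule_format, of qs] len dist st ed h0 hl by simp
    moreover have "s < M" "\<tau>+1-d+s < M" using s d by auto
    ultimately show ?thesis unfolding g_def h0 hl by simp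
  qed
  have G3: "g (M - s) = g (\<tau>+d-s)" if s: "s < d" for s
  proof -
    define qs where "qs = map (\<lambda>j. if j \<le> 2*s then (N - 2*s + j) mod N else t + j - 2*s - 1) [0..<2*d+1]"
    have len: "length qs = 2*d+1" unfolding qs_def by simp
    have nth: "qs ! j = (if j \<le> 2*s then (N - 2*s + j) mod N else t + j - 2*s - 1)" if "j < 2*d+1" for j
      unfolding qs_def using that by (simp del: upt_Suc)
    have lt: "2*s < N" using s d N by simp
    have first: "(N - 2*s + j) mod N = (if j < 2*s then N - 2*s + j else 0)" if "j \<le> 2*s" for j
      using that lt by auto
    have dist: "distinct qs" unfolding qs_def distinct_map
    proof
      show "distinct [0..<2*d+1]" by simp
      show "inj_on (\<lambda>j. if j \<le> 2*s then (N - 2*s + j) mod N else t + j - 2*s - 1) (set [0..<2*d+1])"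
      proof (rule inj_onI)
        fix i j assume i: "i \<in> set [0..<2*d+1]" and j: "j \<in> set [0..<2*d+1]"
          and eq: "(if i \<le> 2*s then (N - 2*s + i) mod N else t + i - 2*s - 1)
                 = (if j \<le> 2*s then (N - 2*s + j) mod N else t + j - 2*s - 1)"
        show "i = j" using eq i j first[of i] first[of j] lt d s N
          by (auto simp: t_def split: if_splits)
      qed
    qed
    have st: "set qs \<subseteq> {..<N}" unfolding qs_def using d s N by (auto simp: t_def)
    have ed: "\<forall>j<2*d. R (c (qs!j)) (c (qs!Suc j))"
    proof (intro allI impI)
      fix j assume j: "j < 2*d"
      consider "j < 2*s" | "j = 2*s" | "j > 2*s" by linarith
      thus "R (c (qs!j)) (c (qs!Suc j))"
      proof cases
        case 1
        have e1: "R (c (N - 2*s + j)) (c (Suc (N - 2*s + j) mod N))" using cyc 1 lt by simp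
        have e2: "Suc (N - 2*s + j) mod N = (N - 2*s + Suc j) mod N" using 1 lt by simp
        have e3: "qs!j = N - 2*s + j"
        proof -
          have "qs!j = (N-2*s+j) mod N" using nth[of j] j 1 by simp
          also have "\<dots> = N-2*s+j" using 1 lt by simp
          finally show ?thesis .
        qed
        have e4: "qs!Suc j = (N-2*s+Suc j) mod N" using nth[of "Suc j"] j 1 by simp
        show ?thesis unfolding e3 e4 e2[symmetric] by (rule e1)
      next
        case 2
        thus ?thesis using nth j chord lt by (simp add: t_def)
      next
        case 3
        have "R (c (t + j - 2*s - 1)) (c (Suc (t + j - 2*s - 1)))"
          by (rule cyc') (use 3 d N s j in \<open>auto simp: t_def\<close>)
        moreover have "Suc (t + j - 2*s - 1) = t + Suc j - 2*s - 1" using 3 by (simp add: t_def)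
        ultimately show ?thesis using nth j 3 by simp
      qed
    qed
    have h0: "qs!0 = 2*((M - s) mod M)" using nth lt N s d
      by (cases "s = 0") auto
    have hl: "qs!(2*d) = 2*(\<tau>+d-s)" using nth s d by (simp add: t_def)
    have "col (c (qs!0)) = col (c (qs!(2*d)))"
      using H[rule_format, of qs] len dist st ed h0 hl by simp
    moreover have "\<tau>+d-s < M" using s d by auto
    ultimately show ?thesis unfolding g_def h0 hl by simp
  qed
  have step: "g s = g (Suc s)" if s: "s < d" for s
  proof -
    have "g s = g (\<tau>+1-d+s)" by (rule G2[OF s])
    also have "\<dots> = g (\<tau>+1-d+s + d)" by (rule G1[symmetric])
    also have "\<tau>+1-d+s + d = \<tau>+1+s" using d by simp
    finally have a: "g s = g (\<tau>+1+s)" .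
    have "g (M - (d-1-s)) = g (\<tau>+d-(d-1-s))" by (rule G3) (use s in auto)
    moreover have "\<tau>+d-(d-1-s) = \<tau>+1+s" using s by simp
    moreover have "g (M - (d-1-s)) = g (Suc s)"
    proof -
      have "g (M - (d-1-s)) = g (M - (d-1-s) + d)" by (rule G1[symmetric])
      also have "M - (d-1-s) + d = Suc s + M" using s d by simp
      finally show ?thesis using Gp[of "Suc s"] by simp
    qed
    ultimately show ?thesis using a by simp
  qed
  have all: "g x = g 0" for x
  proof (induction x rule: less_induct)
    case (less x)
    show ?case
    proof (cases x)
      case 0 thus ?thesis by simp
    next
      case (Suc y)
      show ?thesis
      proof (cases "y < d")
        case True
        hence "g (Suc y) = g y" using step by simp
        moreover have "g y = g 0" by (rule less) (simp add: Suc)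
        ultimately show ?thesis using Suc by simp
      next
        case False
        have "g x = g (x - d + d)" using False Suc by simp
        also have "\<dots> = g (x - d)" by (rule G1)
        also have "\<dots> = g 0" by (rule less) (use d Suc in auto)
        finally show ?thesis .
      qed
    qed
  qed
  show ?thesis
  proof (intro allI impI)
    fix s assume "s < M"
    have "g s = g 0" by (rule all)
    thus "col (c (2*s)) = col (c 0)" unfolding g_def using \<open>s < M\<close> by simp
  qed
qed

primrec reach :: "(nat \<Rightarrow> nat \<Rightarrow> bool) \<Rightarrow> nat \<Rightarrow> nat \<Rightarrow> nat set" where
  "reach F x 0 = {x}"
| "reach F x (Suc i) = reach F x i \<union> {w. \<exists>u\<in>reach F x i. F u w}"

locale bfs =
  fixes F :: "nat \<Rightarrow> nat \<Rightarrow> bool" and x :: nat and X :: "nat set"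
  assumes sym: "\<And>u w. F u w \<Longrightarrow> F w u"
    and bip: "\<And>u w. F u w \<Longrightarrow> (u \<in> X \<longleftrightarrow> w \<notin> X)"
begin

definition rchd :: "nat \<Rightarrow> bool" where "rchd v \<longleftrightarrow> (\<exists>i. v \<in> reach F x i)"
definition lay :: "nat \<Rightarrow> nat" where "lay v = (LEAST i. v \<in> reach F x i)"
definition par :: "nat \<Rightarrow> nat" where "par v = (SOME u. rchd u \<and> lay u = lay v - 1 \<and> F u v)"
definition anc :: "nat \<Rightarrow> nat \<Rightarrow> nat" where "anc j v = (par ^^ (lay v - j)) v"

lemma irr: "\<not> F u u" using bip by blast

lemma reach_mono: "i \<le> j \<Longrightarrow> reach F x i \<subseteq> reach F x j"
proof (induction j)
  case 0 thus ?case by simp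
next
  case (Suc j) thus ?case by (cases "i = Suc j") auto
qed

lemma lay_in: "rchd v \<Longrightarrow> v \<in> reach F x (lay v)"
  unfolding rchd_def lay_def by (metis LeastI)

lemma lay_le: "v \<in> reach F x i \<Longrightarrow> lay v \<le> i"
  unfolding lay_def by (rule Least_le)

lemma rchd_x: "rchd x" unfolding rchd_def by (metis reach.simps(1) singletonI)
lemma lay_x: "lay x = 0" using lay_le[of x 0] by simp

lemma lay0: "rchd v \<Longrightarrow> lay v = 0 \<Longrightarrow> v = x"
  using lay_in[of v] by simp

lemma edge_rchd: assumes "rchd v" "F v w" shows "rchd w" "lay w \<le> Suc (lay v)"
proof -
  have h: "w \<in> reach F x (Suc (lay v))" using lay_in[OF assms(1)] assms(2) by auto
  show "rchd w" unfolding rchd_def using h by blast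
  show "lay w \<le> Suc (lay v)" by (rule lay_le[OF h])
qed

lemma edge_lay: assumes "rchd v" "F v w" shows "lay v \<le> Suc (lay w)"
  using edge_rchd(2)[OF edge_rchd(1)[OF assms] sym[OF assms(2)]] by simp

lemma par_ex: assumes "rchd v" "lay v \<noteq> 0" shows "\<exists>u. rchd u \<and> lay u = lay v - 1 \<and> F u v"
proof -
  obtain j where j: "lay v = Suc j" using assms(2) by (cases "lay v") auto
  have "v \<in> reach F x (Suc j)" using lay_in[OF assms(1)] j by simp
  moreover have "v \<notin> reach F x j" using lay_le[of v j] j by auto
  ultimately obtain u where u: "u \<in> reach F x j" "F u v" by auto
  have r: "rchd u" using u(1) unfolding rchd_def by auto
  have "lay u \<le> j" using lay_le[OF u(1)] .
  moreover have "lay v \<le> Suc (lay u)" using edge_rchd(2)[OF r u(2)] .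
  ultimately have "lay u = j" using j by simp
  thus ?thesis using r u j by auto
qed

lemma par_prop: assumes "rchd v" "lay v \<noteq> 0"
  shows "rchd (par v)" "lay (par v) = lay v - 1" "F (par v) v"
proof -
  have "rchd (par v) \<and> lay (par v) = lay v - 1 \<and> F (par v) v"
    unfolding par_def using someI_ex[OF par_ex[OF assms]] .
  thus "rchd (par v)" "lay (par v) = lay v - 1" "F (par v) v" by auto
qed

lemma funpow_par: "rchd v \<Longrightarrow> n \<le> lay v \<Longrightarrow> rchd ((par ^^ n) v) \<and> lay ((par ^^ n) v) = lay v - n"
proof (induction n)
  case 0 thus ?case by simp
next
  case (Suc n)
  hence ih: "rchd ((par ^^ n) v)" "lay ((par ^^ n) v) = lay v - n" by auto
  have "lay ((par ^^ n) v) \<noteq> 0" using ih(2) Suc.prems by simp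
  thus ?case using par_prop[OF ih(1)] ih(2) by simp
qed

lemma anc_rchd: "rchd v \<Longrightarrow> j \<le> lay v \<Longrightarrow> rchd (anc j v)"
  unfolding anc_def using funpow_par by simp
lemma anc_lay: "rchd v \<Longrightarrow> j \<le> lay v \<Longrightarrow> lay (anc j v) = j"
  unfolding anc_def using funpow_par[of v "lay v - j"] by simp
lemma anc_self: "anc (lay v) v = v" unfolding anc_def by simp
lemma anc_edge: assumes "rchd v" "j < lay v" shows "F (anc j v) (anc (Suc j) v)"
proof -
  have e: "lay v - j = Suc (lay v - Suc j)" using assms(2) by simp
  have "anc j v = par (anc (Suc j) v)" unfolding anc_def e by simp
  moreover have "lay (anc (Suc j) v) \<noteq> 0" using anc_lay[OF assms(1), of "Suc j"] assms(2) by simp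
  ultimately show ?thesis using par_prop(3)[OF anc_rchd[OF assms(1)]] assms(2) by simp
qed
lemma anc_anc: assumes "rchd v" "j \<le> j'" "j' \<le> lay v" shows "anc j (anc j' v) = anc j v"
proof -
  have l: "lay (anc j' v) = j'" using anc_lay[OF assms(1,3)] .
  have "anc j (anc j' v) = (par ^^ (j' - j)) (anc j' v)" unfolding anc_def[of j] l ..
  also have "\<dots> = (par ^^ (j' - j)) ((par ^^ (lay v - j')) v)" unfolding anc_def ..
  also have "\<dots> = (par ^^ (j' - j + (lay v - j'))) v" by (simp add: funpow_add)
  also have "j' - j + (lay v - j') = lay v - j" using assms by simp
  finally show ?thesis unfolding anc_def .
qed
lemma anc0: assumes "rchd v" shows "anc 0 v = x"
  using lay0[OF anc_rchd[OF assms] anc_lay[OF assms]] by simp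

lemma parity: "rchd v \<Longrightarrow> (v \<in> X \<longleftrightarrow> (x \<in> X \<longleftrightarrow> even (lay v)))"
proof (induction "lay v" arbitrary: v)
  case 0
  hence "v = x" using lay0 by simp
  thus ?case using 0 by simp
next
  case (Suc n)
  have l: "lay (par v) = n" "rchd (par v)" "F (par v) v" using par_prop[OF Suc.prems] Suc.hyps(2) by auto
  have "par v \<in> X \<longleftrightarrow> (x \<in> X \<longleftrightarrow> even n)" using Suc.hyps(1)[OF l(1)[symmetric] l(2)] l(1) by simp
  thus ?case using bip[OF l(3)] Suc.hyps(2)[symmetric] by auto
qed

lemma edge_layers: assumes "rchd v" "F v w" shows "lay w = Suc (lay v) \<or> lay v = Suc (lay w)"
proof -
  have rw: "rchd w" using edge_rchd[OF assms] by simp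
  have "lay w \<noteq> lay v" using parity[OF assms(1)] parity[OF rw] bip[OF assms(2)] by auto
  thus ?thesis using edge_rchd(2)[OF assms] edge_lay[OF assms] by linarith
qed

end

context bfs begin

lemma core:
  assumes N: "N = 2*M" and inj: "inj_on c {..<N}"
    and cyc: "\<forall>j<N. F (c j) (c (Suc j mod N))" and chord: "F (c 0) (c (2*\<tau>+1))"
    and rc: "\<forall>j<N. rchd (c j)" and ev: "\<forall>s<M. lay (c (2*s)) = i" and ge: "\<forall>j<N. i \<le> lay (c j)"
    and i: "1 \<le> i" "i + 1 \<le> l" and tau: "l \<le> \<tau> + 1" "\<tau> + l \<le> M"
  shows "\<exists>f. inj_on f {0..<2*l} \<and> (\<forall>p<2*l. F (f p) (f (Suc p mod (2*l)))) \<and> (\<forall>p<2*l. rchd (f p))"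
proof -
  have M3: "3 \<le> M" using i tau by simp
  define Hs where "Hs = {h. h \<le> i \<and> (\<forall>s<M. anc h (c (2*s)) = anc h (c 0))}"
  have finH: "finite Hs" unfolding Hs_def by (rule finite_subset[of _ "{..i}"]) auto
  have rc0: "rchd (c 0)" using rc N M3 by simp
  have 0: "0 \<in> Hs" unfolding Hs_def
  proof (intro CollectI conjI allI impI)
    fix s assume "s < M"
    hence "rchd (c (2*s))" using rc N by simp
    thus "anc 0 (c (2*s)) = anc 0 (c 0)" using anc0 rc0 by simp
  qed simp
  define h where "h = Max Hs"
  have hH: "h \<in> Hs" unfolding h_def using finH 0 by (intro Max_in) auto
  have hi: "h \<le> i" using hH unfolding Hs_def by simp
  have anc_h: "anc h (c (2*s)) = anc h (c 0)" if "s < M" for s using hH that unfolding Hs_def by simp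
  have "h \<noteq> i"
  proof
    assume "h = i"
    hence e: "anc i (c 2) = anc i (c 0)" using anc_h[of 1] M3 by simp
    have l: "lay (c 2) = i" "lay (c 0) = i" using ev[rule_format, of 1] ev[rule_format, of 0] M3 by auto
    have "c 2 = c 0" using e anc_self[of "c 2"] anc_self[of "c 0"] l by simp
    moreover have "(2::nat) \<in> {..<N}" "(0::nat) \<in> {..<N}" using N M3 by auto
    ultimately show False using inj[unfolded inj_on_def] \<open>c 2 = c 0\<close> by fastforce
  qed
  hence hi': "h < i" using hi by simp
  have "Suc h \<notin> Hs"
  proof
    assume "Suc h \<in> Hs" hence "Suc h \<le> h" unfolding h_def using finH by (simp add: Max_ge)
    thus False by simp
  qed
  then obtain s0 where s0: "s0 < M" "anc (Suc h) (c (2*s0)) \<noteq> anc (Suc h) (c 0)"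
    unfolding Hs_def using hi' by auto
  define d where "d = l - i + h"
  define col where "col v = (anc (Suc h) v = anc (Suc h) (c 0))" for v
  have d: "1 \<le> d" "d \<le> \<tau>" "\<tau> + d < M" using i tau hi' unfolding d_def by auto
  have notall: "\<not> (\<forall>s<M. col (c (2*s)) = col (c 0))"
    using s0 unfolding col_def by auto
  have symF: "\<forall>u w. F u w \<longrightarrow> F w u" using sym by blast
  obtain qs where qs: "length qs = 2*d+1" "distinct qs" "set qs \<subseteq> {..<N}"
      "\<forall>j<2*d. F (c (qs!j)) (c (qs!Suc j))" "even (qs!0)" "even (qs!(2*d))"
      "col (c (qs!0)) \<noteq> col (c (qs!(2*d)))"
    using cyc_col[OF symF N cyc chord d, of col] notall by blast
  have qsN: "qs!j < N" if "j \<le> 2*d" for j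
  proof -
    have "j < length qs" using qs(1) that by simp
    hence "qs!j \<in> set qs" by (rule nth_mem)
    thus ?thesis using qs(3) by auto
  qed
  define a where "a = c (qs!0)"
  define b where "b = c (qs!(2*d))"
  obtain s1 where s1: "qs!0 = 2*s1" using qs(5) by (elim evenE)
  obtain s2 where s2: "qs!(2*d) = 2*s2" using qs(6) by (elim evenE)
  have s1M: "s1 < M" using qsN[of 0] N s1 by simp
  have s2M: "s2 < M" using qsN[of "2*d"] N s2 by simp
  have la: "lay a = i" unfolding a_def s1 using ev s1M by simp
  have lb: "lay b = i" unfolding b_def s2 using ev s2M by simp
  have ra: "rchd a" unfolding a_def using rc qsN[of 0] by simp
  have rb: "rchd b" unfolding b_def using rc qsN[of "2*d"] by simp
  have yab: "anc h a = anc h b"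
    unfolding a_def b_def s1 s2 using anc_h[OF s1M] anc_h[OF s2M] by simp
  have ab: "anc (Suc h) a \<noteq> anc (Suc h) b" using qs(7) unfolding col_def a_def b_def by auto
  define D where "D = i - h"
  have D: "1 \<le> D" "2*l = 2*D + 2*d" "h + D = i" using hi' i unfolding D_def d_def by auto
  define f where "f p = (if p < D then anc (h+p) a else if p \<le> D + 2*d then c (qs!(p - D))
     else anc (i - (p - (D + 2*d))) b)" for p
  have f1: "f p = anc (h+p) a" "lay (f p) = h + p" "rchd (f p)" if "p < D" for p
    using that anc_lay[OF ra] anc_rchd[OF ra] la D unfolding f_def by auto
  have f2: "f p = c (qs!(p-D))" "i \<le> lay (f p)" "rchd (f p)" if "D \<le> p" "p \<le> D + 2*d" for p
  proof -
    show e: "f p = c (qs!(p-D))" using that unfolding f_def by auto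
    have "qs!(p-D) < N" using qsN that by simp
    thus "i \<le> lay (f p)" "rchd (f p)" using e ge rc by auto
  qed
  have f3: "f p = anc (i - (p - (D + 2*d))) b" "lay (f p) = i - (p - (D + 2*d))"
     "rchd (f p)" "h < i - (p - (D + 2*d))" "i - (p - (D + 2*d)) < i"
    if "D + 2*d < p" "p < 2*l" for p
  proof -
    show e: "f p = anc (i - (p - (D + 2*d))) b" using that D unfolding f_def by auto
    show "lay (f p) = i - (p - (D + 2*d))" "rchd (f p)" using e anc_lay[OF rb] anc_rchd[OF rb] lb by auto
    show "h < i - (p - (D + 2*d))" "i - (p - (D + 2*d)) < i" using that D by auto
  qed
  have s13: "anc (Suc h) a = anc (Suc h) b" if "p < D" "D + 2*d < p'" "p' < 2*l" "f p = f p'" for p p'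
  proof -
    have j: "h + p = i - (p' - (D + 2*d))" using f1(2)[of p] f3(2)[of p'] that by metis
    have hj: "Suc h \<le> h + p" using j f3(4)[of p'] that by simp
    have "anc (h+p) a = anc (h+p) b" using f1(1)[of p] f3(1)[of p'] that j by simp
    hence "anc (Suc h) (anc (h+p) a) = anc (Suc h) (anc (h+p) b)" by simp
    moreover have "anc (Suc h) (anc (h+p) a) = anc (Suc h) a"
      by (rule anc_anc[OF ra hj]) (use la D that in simp)
    moreover have "anc (Suc h) (anc (h+p) b) = anc (Suc h) b"
      by (rule anc_anc[OF rb hj]) (use lb D that in simp)
    ultimately show ?thesis by simp
  qed
  have injf: "inj_on f {0..<2*l}"
  proof (rule inj_onI)
    fix p p' assume p: "p \<in> {0..<2*l}" and p': "p' \<in> {0..<2*l}" and eq: "f p = f p'"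
    have pl: "p < 2*l" "p' < 2*l" using p p' by auto
    consider "D \<le> p \<and> p \<le> D + 2*d" "D \<le> p' \<and> p' \<le> D + 2*d"
      | "D \<le> p \<and> p \<le> D + 2*d" "\<not> (D \<le> p' \<and> p' \<le> D + 2*d)"
      | "\<not> (D \<le> p \<and> p \<le> D + 2*d)" "D \<le> p' \<and> p' \<le> D + 2*d"
      | "p < D" "p' < D" | "p < D" "D + 2*d < p'" | "D + 2*d < p" "p' < D" | "D + 2*d < p" "D + 2*d < p'"
      by linarith
    thus "p = p'"
    proof cases
      case 1
      hence "c (qs!(p-D)) = c (qs!(p'-D))" using f2 eq by metis
      moreover have "qs!(p-D) \<in> {..<N}" "qs!(p'-D) \<in> {..<N}" using qsN 1 by auto
      ultimately have "qs!(p-D) = qs!(p'-D)" using inj unfolding inj_on_def by blast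
      moreover have "p - D < length qs" "p' - D < length qs" using qs(1) 1 by auto
      ultimately have "p - D = p' - D" using qs(2) nth_eq_iff_index_eq by blast
      thus "p = p'" using 1 by linarith
    next
      case 2
      have "i \<le> lay (f p)" using f2 2 by simp
      moreover have "lay (f p') < i"
      proof (cases "p' < D")
        case True thus ?thesis using f1(2)[of p'] D by simp
      next
        case False thus ?thesis using 2 f3(2)[of p'] f3(5)[of p'] pl by simp
      qed
      ultimately show ?thesis using eq by simp
    next
      case 3
      have "i \<le> lay (f p')" using f2 3 by simp
      moreover have "lay (f p) < i"
      proof (cases "p < D")
        case True thus ?thesis using f1(2)[of p] D by simp
      next
        case False thus ?thesis using 3 f3(2)[of p] f3(5)[of p] pl by simp
      qed
      ultimately show ?thesis using eq by simp
    next
      case 4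
      have "lay (f p) = lay (f p')" using eq by simp
      moreover have "lay (f p) = h + p" by (rule f1(2)) (rule 4(1))
      moreover have "lay (f p') = h + p'" by (rule f1(2)) (rule 4(2))
      ultimately show ?thesis by linarith
    next
      case 5
      have False using s13[OF 5 pl(2) eq] ab by simp
      thus ?thesis ..
    next
      case 6
      have False using s13[OF 6(2) 6(1) pl(1) eq[symmetric]] ab by simp
      thus ?thesis ..
    next
      case 7
      have "lay (f p) = lay (f p')" using eq by simp
      moreover have "lay (f p) = i - (p - (D + 2*d))" by (rule f3(2)) (use 7 pl in auto)
      moreover have "lay (f p') = i - (p' - (D + 2*d))" by (rule f3(2)) (use 7 pl in auto)
      ultimately have "i - (p - (D + 2*d)) = i - (p' - (D + 2*d))" by simp
      moreover have "p - (D + 2*d) < i" "p' - (D + 2*d) < i" using pl D 7 by auto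
      ultimately show ?thesis using 7 by simp
    qed
  qed
  have edges: "F (f p) (f (Suc p mod (2*l)))" if p: "p < 2*l" for p
  proof -
    consider "Suc p < D" | "Suc p = D" | "D \<le> p \<and> p < D + 2*d" | "p = D + 2*d"
      | "D + 2*d < p \<and> Suc p < 2*l" | "D + 2*d < p \<and> Suc p = 2*l"
      using p D by linarith
    thus ?thesis
    proof cases
      case 1
      have "F (anc (h+p) a) (anc (Suc (h+p)) a)" by (rule anc_edge[OF ra]) (use 1 la D in simp)
      thus ?thesis using f1[of p] f1[of "Suc p"] 1 D p by simp
    next
      case 2
      have "F (anc (h+p) a) (anc (Suc (h+p)) a)" by (rule anc_edge[OF ra]) (use 2 la D in simp)
      moreover have "anc (Suc (h+p)) a = a"
      proof -
        have "Suc (h+p) = i" using 2 D by simp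
        thus ?thesis using anc_self[of a] la by simp
      qed
      moreover have "f (Suc p) = a" using f2[of "Suc p"] 2 unfolding a_def by simp
      ultimately show ?thesis using f1[of p] 2 D p by simp
    next
      case 3
      have "p - D < 2*d" using 3 by linarith
      hence "F (c (qs!(p-D))) (c (qs!Suc (p-D)))" using qs(4) by blast
      moreover have "Suc (p - D) = Suc p - D" using 3 by arith
      ultimately show ?thesis using f2[of p] f2[of "Suc p"] 3 D p by simp
    next
      case 4
      have fp: "f p = b" using f2[of p] 4 unfolding b_def by simp
      have e: "F (anc (i-1) b) b"
        using anc_edge[OF rb, of "i-1"] anc_self[of b] lb i by simp
      show ?thesis
      proof (cases "D = 1")
        case True
        hence "Suc p mod (2*l) = 0" using 4 D by simp
        moreover have "f 0 = anc h a" using f1[of 0] D by simp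
        moreover have "h = i - 1" using True D by simp
        ultimately show ?thesis using fp e sym yab by simp
      next
        case False
        hence "Suc p < 2*l" using 4 D by simp
        hence "f (Suc p) = anc (i-1) b" using f3(1)[of "Suc p"] 4 by simp
        thus ?thesis using fp e sym \<open>Suc p < 2*l\<close> by simp
      qed
    next
      case 5
      define j where "j = i - (Suc p - (D + 2*d))"
      have j1: "i - (p - (D + 2*d)) = Suc j" using 5 D hi' unfolding j_def by arith
      have "F (anc j b) (anc (Suc j) b)" by (rule anc_edge[OF rb]) (use j1 lb in simp)
      thus ?thesis using f3(1)[of p] f3(1)[of "Suc p"] 5 j1 sym unfolding j_def by simp
    next
      case 6
      have ee: "i - (p - (D + 2*d)) = Suc h" using 6 D by arith
      have fp: "f p = anc (Suc h) b" using f3(1)[of p] 6 D unfolding ee by simp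
      have "F (anc h b) (anc (Suc h) b)" by (rule anc_edge[OF rb]) (use lb hi' in simp)
      moreover have "f 0 = anc h a" using f1[of 0] D by simp
      ultimately show ?thesis using fp 6 sym yab by simp
    qed
  qed
  have rf: "rchd (f p)" if "p < 2*l" for p
    using f1[of p] f2[of p] f3[of p] that by (cases "p < D"; cases "p \<le> D + 2*d") auto
  show ?thesis using injf edges rf by blast
qed

end

context bfs begin

lemma longest_path:
  assumes W: "finite W" "w0 \<in> W"
  shows "\<exists>ps. ps \<noteq> [] \<and> distinct ps \<and> set ps \<subseteq> W \<and> (\<forall>j. Suc j < length ps \<longrightarrow> F (ps!j) (ps!Suc j))
          \<and> (\<forall>w\<in>W. F (ps!0) w \<longrightarrow> w \<in> set ps)"
proof -
  define P where "P ps \<longleftrightarrow> ps \<noteq> [] \<and> distinct ps \<and> set ps \<subseteq> W \<and> (\<forall>j. Suc j < length ps \<longrightarrow> F (ps!j) (ps!Suc j))" for ps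
  define Ls where "Ls = length ` {ps. P ps}"
  have lenle: "length ps \<le> card W" if "P ps" for ps
    using that unfolding P_def by (metis W(1) card_mono distinct_card)
  have fin: "finite Ls" unfolding Ls_def by (rule finite_subset[of _ "{..card W}"]) (auto dest: lenle)
  have "P [w0]" unfolding P_def using W by simp
  hence ne: "Ls \<noteq> {}" unfolding Ls_def by auto
  obtain ps where ps: "P ps" "length ps = Max Ls"
    using Max_in[OF fin ne] unfolding Ls_def by auto
  have mx: "length qs \<le> length ps" if "P qs" for qs
    using ps(2) fin that unfolding Ls_def by (simp add: Max_ge)
  have "\<forall>w\<in>W. F (ps!0) w \<longrightarrow> w \<in> set ps"
  proof (intro ballI impI, rule ccontr)
    fix w assume w: "w \<in> W" "F (ps!0) w" "w \<notin> set ps"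
    have "P (w # ps)" unfolding P_def
    proof (intro conjI allI impI)
      show "distinct (w # ps)" using ps(1) w unfolding P_def by simp
      show "set (w # ps) \<subseteq> W" using ps(1) w unfolding P_def by simp
      fix j assume j: "Suc j < length (w # ps)"
      show "F ((w # ps) ! j) ((w # ps) ! Suc j)"
      proof (cases j)
        case 0 thus ?thesis using w(2) sym by simp
      next
        case (Suc j') thus ?thesis using ps(1) j unfolding P_def by simp
      qed
    qed simp
    thus False using mx[of "w # ps"] by simp
  qed
  thus ?thesis using ps(1) unfolding P_def by blast
qed

lemma path_parity:
  assumes "\<forall>j. Suc j < length ps \<longrightarrow> F (ps!j) (ps!Suc j)" "j < length ps"
  shows "ps!j \<in> X \<longleftrightarrow> (ps!0 \<in> X \<longleftrightarrow> even j)"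
  using assms(2)
proof (induction j)
  case 0 thus ?case by simp
next
  case (Suc j)
  have "F (ps!j) (ps!Suc j)" using assms(1) Suc.prems by simp
  thus ?case using bip Suc by auto
qed

end

context bfs begin

lemma pick_chord:
  fixes J :: "nat set" and l :: nat
  assumes fin: "finite J" and odd: "\<forall>j\<in>J. odd j" and cJ: "2*l - 1 \<le> card J" and l: "2 \<le> l"
  shows "\<exists>t\<in>J. 2*l - 1 \<le> t \<and> t + (2*l - 2) \<le> Max J"
proof -
  define Jm where "Jm = Max J"
  have Jne: "J \<noteq> {}" using cJ l by auto
  have JmJ: "Jm \<in> J" unfolding Jm_def using fin Jne by simp
  define B1 where "B1 = (\<lambda>r. 2*r+1) ` {..<l-1}"
  define B2 where "B2 = (\<lambda>r. Jm - 2*r) ` {..<l-1}"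
  have c1: "card B1 \<le> l - 1" unfolding B1_def using card_image_le[of "{..<l-1}"] by simp
  have c2: "card B2 \<le> l - 1" unfolding B2_def using card_image_le[of "{..<l-1}"] by simp
  have fB: "finite (B1 \<union> B2)" unfolding B1_def B2_def by simp
  have "card J \<le> card ((J - (B1 \<union> B2)) \<union> (B1 \<union> B2))" by (rule card_mono) (use fin fB in auto)
  also have "\<dots> \<le> card (J - (B1 \<union> B2)) + card (B1 \<union> B2)" by (rule card_Un_le)
  finally have "card J \<le> card (J - (B1 \<union> B2)) + card (B1 \<union> B2)" .
  moreover have "card (B1 \<union> B2) \<le> 2*l - 2" using card_Un_le[of B1 B2] c1 c2 by simp
  ultimately have "card (J - (B1 \<union> B2)) > 0" using cJ l by simp
  hence "J - (B1 \<union> B2) \<noteq> {}" by (metis card.empty less_irrefl)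
  then obtain t where t: "t \<in> J" "t \<notin> B1" "t \<notin> B2" by blast
  have tle: "t \<le> Jm" unfolding Jm_def using fin t(1) by simp
  have "2*l - 1 \<le> t"
  proof (rule ccontr)
    assume "\<not> 2*l - 1 \<le> t"
    moreover obtain r where "t = 2*r+1" using odd t(1) by (metis oddE)
    ultimately have "r < l - 1" by simp
    hence "t \<in> B1" unfolding B1_def using \<open>t = 2*r+1\<close> by auto
    thus False using t by simp
  qed
  moreover have "t + (2*l - 2) \<le> Jm"
  proof (rule ccontr)
    assume a: "\<not> t + (2*l - 2) \<le> Jm"
    have "even (Jm - t)" using odd t(1) JmJ tle by auto
    then obtain r where r: "Jm - t = 2*r" by (elim evenE)
    have "r < l - 1" using a r tle by simp
    moreover have "t = Jm - 2*r" using r tle by simp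
    ultimately have "t \<in> B2" unfolding B2_def by auto
    thus False using t by simp
  qed
  ultimately show ?thesis using t(1) unfolding Jm_def by blast
qed

end

context bfs begin

lemma dense_layer_cycle:
  assumes W: "finite W" "W \<noteq> {}" and Wl: "\<forall>v\<in>W. rchd v \<and> (lay v = i \<or> lay v = Suc i)"
    and dg: "\<forall>v\<in>W. 2*l - 1 \<le> deg F W v" and i: "1 \<le> i" "i+1 \<le> l"
  shows "\<exists>f. inj_on f {0..<2*l} \<and> (\<forall>p<2*l. F (f p) (f (Suc p mod (2*l)))) \<and> (\<forall>p<2*l. rchd (f p))"
proof -
  obtain w0 where w0: "w0 \<in> W" using W by auto
  obtain ps where ps: "ps \<noteq> []" "distinct ps" "set ps \<subseteq> W" "\<forall>j. Suc j < length ps \<longrightarrow> F (ps!j) (ps!Suc j)"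
      "\<forall>w\<in>W. F (ps!0) w \<longrightarrow> w \<in> set ps"
    using longest_path[OF W(1) w0] by blast
  have psW: "ps!j \<in> W" if "j < length ps" for j using ps(3) nth_mem[OF that] by auto
  define J where "J = {j. j < length ps \<and> F (ps!0) (ps!j)}"
  have finJ: "finite J" unfolding J_def by simp
  have oddJ: "\<forall>j\<in>J. odd j"
  proof
    fix j assume "j \<in> J"
    hence j: "j < length ps" "F (ps!0) (ps!j)" unfolding J_def by auto
    show "odd j" using path_parity[OF ps(4) j(1)] bip[OF j(2)] by auto
  qed
  have l2: "2 \<le> l" using i by simp
  have cJ: "2*l - 1 \<le> card J"
  proof -
    have "{w\<in>W. F (ps!0) w} \<subseteq> (\<lambda>j. ps!j) ` J"
    proof
      fix w assume "w \<in> {w\<in>W. F (ps!0) w}"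
      hence w: "w \<in> W" "F (ps!0) w" by auto
      hence "w \<in> set ps" using ps(5) by blast
      then obtain j where "j < length ps" "ps!j = w" by (metis in_set_conv_nth)
      thus "w \<in> (\<lambda>j. ps!j) ` J" unfolding J_def using w by auto
    qed
    hence "deg F W (ps!0) \<le> card ((\<lambda>j. ps!j) ` J)" unfolding deg_def
      by (intro card_mono) (use finJ in auto)
    also have "\<dots> \<le> card J" by (rule card_image_le[OF finJ])
    finally show ?thesis using dg psW[of 0] ps(1) by fastforce
  qed
  obtain t where t: "t \<in> J" "2*l - 1 \<le> t" "t + (2*l - 2) \<le> Max J"
    using pick_chord[OF finJ oddJ cJ l2] by blast
  define Jm where "Jm = Max J"
  have JmJ: "Jm \<in> J" unfolding Jm_def using finJ t(1) by (metis Max_in empty_iff)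
  have Jm: "Jm < length ps" "F (ps!0) (ps!Jm)" "odd Jm" using JmJ oddJ unfolding J_def by auto
  have tJ: "t < length ps" "F (ps!0) (ps!t)" "odd t" using t(1) oddJ unfolding J_def by auto
  define N where "N = Suc Jm"
  define M where "M = N div 2"
  define \<tau> where "\<tau> = t div 2"
  have NM: "N = 2*M" unfolding N_def M_def using Jm(3) by simp
  have tau: "t = 2*\<tau>+1" unfolding \<tau>_def using tJ(3) by simp
  have tau1: "l \<le> \<tau> + 1" "\<tau> + l \<le> M" using t(2,3) tau NM unfolding N_def Jm_def by auto
  have tN: "t < N" using t(3) l2 unfolding N_def Jm_def by simp
  have NL: "N \<le> length ps" unfolding N_def using Jm(1) by simp
  define c0 where "c0 j = ps ! j" for j
  have inj0: "inj_on c0 {..<N}"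
    unfolding c0_def using ps(2) NL by (intro inj_onI) (simp add: nth_eq_iff_index_eq)
  have cyc0: "\<forall>j<N. F (c0 j) (c0 (Suc j mod N))"
  proof (intro allI impI)
    fix j assume j: "j < N"
    show "F (c0 j) (c0 (Suc j mod N))"
    proof (cases "Suc j < N")
      case True thus ?thesis using ps(4) NL unfolding c0_def by simp
    next
      case False
      hence jJ: "j = Jm" using j unfolding N_def by auto
      hence "Suc j mod N = 0" unfolding N_def by simp
      thus ?thesis using jJ using Jm(2) sym unfolding c0_def by simp
    qed
  qed
  have chord0: "F (c0 0) (c0 t)" using tJ unfolding c0_def by simp
  have rc0: "rchd (c0 j)" "lay (c0 j) = i \<or> lay (c0 j) = Suc i" if "j < N" for j
    using Wl psW[of j] that NL unfolding c0_def by auto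
  have layW: "lay v = i \<longleftrightarrow> (v \<in> X \<longleftrightarrow> (x \<in> X \<longleftrightarrow> even i))" if "v \<in> W" for v
    using parity[of v] Wl that by auto
  have lay0: "lay (c0 j) = i \<longleftrightarrow> (even j \<longleftrightarrow> lay (c0 0) = i)" if "j < N" for j
  proof -
    have "j < length ps" "0 < length ps" using that NL by auto
    thus ?thesis using layW[OF psW[of j]] layW[OF psW[of 0]] path_parity[OF ps(4), of j]
      unfolding c0_def by auto
  qed
  show ?thesis
  proof (cases "lay (c0 0) = i")
    case True
    show ?thesis
    proof (rule core[OF NM inj0 cyc0 _ _ _ _ i tau1])
      show "F (c0 0) (c0 (2*\<tau>+1))" using chord0 tau by simp
      show "\<forall>j<N. rchd (c0 j)" using rc0 by simp
      show "\<forall>s<M. lay (c0 (2*s)) = i" using lay0 True NM by simp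
      show "\<forall>j<N. i \<le> lay (c0 j)" using rc0 by fastforce
    qed
  next
    case False
    define c where "c j = c0 ((t + N - j) mod N)" for j
    have idx: "t + N - j = (t + 1) + (N - 1 - j)" if "j < N" for j using that by simp
    have inj: "inj_on c {..<N}"
    proof (rule inj_onI)
      fix j j' assume j: "j \<in> {..<N}" and j': "j' \<in> {..<N}" and e: "c j = c j'"
      have "(t + N - j) mod N = (t + N - j') mod N"
        using inj0 e unfolding c_def inj_on_def using NM j by (metis lessThan_iff mod_less_divisor neq0_conv not_less0)
      hence "((t+1) + (N - 1 - j)) mod N = ((t+1) + (N - 1 - j')) mod N" using idx j j' by simp
      hence "N - 1 - j = N - 1 - j'" by (rule mod_inj_range[rotated 2]) (use j j' in auto)
      thus "j = j'" using j j' by simp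
    qed
    have cyc: "\<forall>j<N. F (c j) (c (Suc j mod N))"
    proof (intro allI impI)
      fix j assume j: "j < N"
      show "F (c j) (c (Suc j mod N))"
      proof (cases "Suc j < N")
        case True
        define q where "q = (t + N - Suc j) mod N"
        have qN: "q < N" unfolding q_def using j by simp
        have "Suc q mod N = Suc (t + N - Suc j) mod N" unfolding q_def by (simp add: mod_Suc_eq)
        also have "Suc (t + N - Suc j) = t + N - j" using j True by simp
        finally have "Suc q mod N = (t + N - j) mod N" .
        hence "F (c (Suc j)) (c j)" using cyc0 qN unfolding c_def q_def by metis
        thus ?thesis using True sym by simp
      next
        case False
        hence sj: "Suc j = N" using j by simp
        hence jj: "j = N - 1" "Suc j mod N = 0" by auto
        have "c 0 = c0 t" unfolding c_def using tN by simp
        moreover have "t + N - j = Suc t" using sj by simp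
        hence "c j = c0 (Suc t mod N)" unfolding c_def by simp
        ultimately show ?thesis using cyc0 tN jj sym by metis
      qed
    qed
    have chord: "F (c 0) (c (2*\<tau>+1))"
    proof -
      have "c 0 = c0 t" unfolding c_def using tN by simp
      moreover have "c t = c0 0" unfolding c_def using tN by simp
      ultimately show ?thesis using chord0 sym tau by metis
    qed
    have cN: "(t + N - j) mod N < N" for j by (rule mod_less_divisor) (use tN in simp)
    show ?thesis
    proof (rule core[OF NM inj cyc chord _ _ _ i tau1])
      show "\<forall>j<N. rchd (c j)" unfolding c_def using rc0 cN by simp
      show "\<forall>j<N. i \<le> lay (c j)" unfolding c_def using rc0 cN by fastforce
      show "\<forall>s<M. lay (c (2*s)) = i"
      proof (intro allI impI)
        fix s assume s: "s < M"
        have o1: "odd (t + N - 2*s)" using tJ(3) NM s by auto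
        have "2 dvd N" using NM by simp
        hence o2: "odd ((t + N - 2*s) mod N)" using o1 by (simp add: dvd_mod_iff)
        show "lay (c (2*s)) = i" unfolding c_def using lay0[OF cN] o2 False by simp
      qed
    qed
  qed
qed

end

locale bfs2 = bfs +
  fixes S :: "nat set" and l :: nat
  assumes finS: "finite S" and Srest: "\<And>u w. F u w \<Longrightarrow> u \<in> S \<and> w \<in> S" and xS: "x \<in> S"
    and nocyc: "\<not> (\<exists>f. inj_on f {0..<2*l} \<and> (\<forall>p<2*l. F (f p) (f (Suc p mod (2*l)))))"
    and l2: "2 \<le> l"
begin

definition Vl :: "nat \<Rightarrow> nat set" where "Vl j = {v. rchd v \<and> lay v = j}"

lemma rchd_S: "rchd v \<Longrightarrow> v \<in> S"
proof -
  assume r: "rchd v"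
  show "v \<in> S"
  proof (cases "lay v = 0")
    case True thus ?thesis using lay0[OF r] xS by simp
  next
    case False thus ?thesis using par_prop(3)[OF r False] Srest by blast
  qed
qed

lemma Vl_S: "Vl j \<subseteq> S" unfolding Vl_def using rchd_S by auto
lemma fin_Vl: "finite (Vl j)" using finite_subset[OF Vl_S finS] .
lemma Vl_disj: "i \<noteq> j \<Longrightarrow> Vl i \<inter> Vl j = {}" unfolding Vl_def by auto
lemma Vl0: "Vl 0 = {x}" unfolding Vl_def using rchd_x lay_x lay0 by auto

definition up :: "nat \<Rightarrow> nat \<Rightarrow> nat" where "up j v = card {w\<in>Vl (Suc j). F v w}"
definition dn :: "nat \<Rightarrow> nat \<Rightarrow> nat" where "dn j v = card {w\<in>Vl j. F v w}"
definition cross :: "nat \<Rightarrow> nat" where "cross j = (\<Sum>v\<in>Vl j. up j v)"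

lemma cross_dn: "cross j = (\<Sum>w\<in>Vl (Suc j). dn j w)"
proof -
  have "cross j = (\<Sum>v\<in>Vl j. \<Sum>w\<in>Vl (Suc j). if F v w then 1 else (0::nat))"
    unfolding cross_def up_def using fin_Vl by (simp add: sum.If_cases Int_def)
  also have "\<dots> = (\<Sum>w\<in>Vl (Suc j). \<Sum>v\<in>Vl j. if F v w then 1 else (0::nat))" by (rule sum.swap)
  also have "\<dots> = (\<Sum>w\<in>Vl (Suc j). dn j w)"
  proof (rule sum.cong[OF refl])
    fix w assume "w \<in> Vl (Suc j)"
    have "(\<Sum>v\<in>Vl j. if F v w then 1 else (0::nat)) = card {v\<in>Vl j. F v w}"
      using fin_Vl by (simp add: sum.If_cases Int_def)
    also have "{v\<in>Vl j. F v w} = {v\<in>Vl j. F w v}" using sym by auto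
    finally show "(\<Sum>v\<in>Vl j. if F v w then 1 else (0::nat)) = dn j w" unfolding dn_def .
  qed
  finally show ?thesis .
qed

lemma deg_split: assumes v: "v \<in> Vl (Suc j)" shows "deg F S v = dn j v + up (Suc j) v"
proof -
  have r: "rchd v" "lay v = Suc j" using v unfolding Vl_def by auto
  have "{w\<in>S. F v w} = {w\<in>Vl j. F v w} \<union> {w\<in>Vl (Suc (Suc j)). F v w}"
  proof
    show "{w\<in>S. F v w} \<subseteq> {w\<in>Vl j. F v w} \<union> {w\<in>Vl (Suc (Suc j)). F v w}"
    proof
      fix w assume "w \<in> {w\<in>S. F v w}"
      hence w: "F v w" by simp
      have "rchd w" using edge_rchd(1)[OF r(1) w] .
      moreover have "lay w = Suc (lay v) \<or> lay v = Suc (lay w)" using edge_layers[OF r(1) w] .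
      ultimately show "w \<in> {w\<in>Vl j. F v w} \<union> {w\<in>Vl (Suc (Suc j)). F v w}" using r w unfolding Vl_def by auto
    qed
  next
    show "{w\<in>Vl j. F v w} \<union> {w\<in>Vl (Suc (Suc j)). F v w} \<subseteq> {w\<in>S. F v w}" using Vl_S by auto
  qed
  moreover have "{w\<in>Vl j. F v w} \<inter> {w\<in>Vl (Suc (Suc j)). F v w} = {}" using Vl_disj[of j "Suc (Suc j)"] by auto
  ultimately show ?thesis unfolding deg_def dn_def up_def using fin_Vl by (simp add: card_Un_disjoint)
qed

lemma edge_neq: "rchd v \<Longrightarrow> F v w \<Longrightarrow> lay w \<noteq> lay v"
  using edge_layers by fastforce

lemma layer_bound:
  assumes i: "1 \<le> i" "i + 1 \<le> l"
  shows "cross i \<le> (2*l - 2) * (card (Vl i) + card (Vl (Suc i)))"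
proof -
  define W where "W = Vl i \<union> Vl (Suc i)"
  have finW: "finite W" unfolding W_def using fin_Vl by simp
  have dis: "Vl i \<inter> Vl (Suc i) = {}" using Vl_disj by simp
  have cW: "card W = card (Vl i) + card (Vl (Suc i))" unfolding W_def using fin_Vl dis by (simp add: card_Un_disjoint)
  have d1: "deg F W v = up i v" if "v \<in> Vl i" for v
  proof -
    have rv: "rchd v" "lay v = i" using that unfolding Vl_def by auto
    have "w \<notin> Vl i" if "F v w" for w using edge_neq[OF rv(1) that] rv(2) unfolding Vl_def by auto
    hence "{w\<in>W. F v w} = {w\<in>Vl (Suc i). F v w}" unfolding W_def by auto
    thus ?thesis unfolding deg_def up_def by simp
  qed
  have d2: "deg F W v = dn i v" if "v \<in> Vl (Suc i)" for v
  proof -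
    have rv: "rchd v" "lay v = Suc i" using that unfolding Vl_def by auto
    have "w \<notin> Vl (Suc i)" if "F v w" for w using edge_neq[OF rv(1) that] rv(2) unfolding Vl_def by auto
    hence "{w\<in>W. F v w} = {w\<in>Vl i. F v w}" unfolding W_def by auto
    thus ?thesis unfolding deg_def dn_def by simp
  qed
  have sW: "(\<Sum>v\<in>W. deg F W v) = 2 * cross i"
  proof -
    have "(\<Sum>v\<in>W. deg F W v) = (\<Sum>v\<in>Vl i. deg F W v) + (\<Sum>v\<in>Vl (Suc i). deg F W v)"
      unfolding W_def using fin_Vl dis by (simp add: sum.union_disjoint)
    also have "\<dots> = (\<Sum>v\<in>Vl i. up i v) + (\<Sum>v\<in>Vl (Suc i). dn i v)"
      using d1 d2 by simp
    also have "\<dots> = 2 * cross i" using cross_dn[of i] unfolding cross_def by simp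
    finally show ?thesis .
  qed
  show ?thesis
  proof (rule ccontr)
    assume "\<not> ?thesis"
    hence "2 * (2*l-2) * card W < 2 * cross i" using cW by simp
    hence "real (2 * (2*l-2) * card W) < real (2 * cross i)" by (simp only: of_nat_less_iff)
    hence "real (\<Sum>v\<in>W. deg F W v) > 2 * real (2*l - 2) * real (card W)"
      unfolding sW by simp
    then obtain W' where W': "W' \<subseteq> W" "W' \<noteq> {}" "\<forall>v\<in>W'. real (deg F W' v) > real (2*l - 2)"
      using dense_sub[OF finW, of F "real (2*l-2)"] sym irr by blast
    have "\<exists>f. inj_on f {0..<2*l} \<and> (\<forall>p<2*l. F (f p) (f (Suc p mod (2*l)))) \<and> (\<forall>p<2*l. rchd (f p))"
    proof (rule dense_layer_cycle[OF _ W'(2) _ _ i])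
      show "finite W'" using finite_subset[OF W'(1) finW] .
      show "\<forall>v\<in>W'. rchd v \<and> (lay v = i \<or> lay v = Suc i)" using W'(1) unfolding W_def Vl_def by auto
      show "\<forall>v\<in>W'. 2*l - 1 \<le> deg F W' v" using W'(3) l2 by fastforce
    qed
    thus False using nocyc by blast
  qed
qed

end

lemma grow:
  fixes a :: "nat \<Rightarrow> real" and K \<delta> :: real
  assumes K: "K > 0" and a0: "a 0 = 1" and a1: "\<delta> \<le> a 1" and d1: "1 \<le> \<delta>"
    and rec: "\<forall>i. 1 \<le> i \<and> i < l \<longrightarrow> \<delta> * a i \<le> K*(a (i-1) + a i) + K*(a i + a (Suc i))"
    and rho: "2 \<le> \<delta>/K - 2"
  shows "1 \<le> j \<Longrightarrow> j \<le> l \<Longrightarrow> (\<delta>/K - 3)^(j-1) * \<delta> \<le> a j \<and> a (j-1) \<le> a j"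
proof (induction j)
  case 0 thus ?case by simp
next
  case (Suc j)
  show ?case
  proof (cases "j = 0")
    case True thus ?thesis using a0 a1 d1 by simp
  next
    case False
    hence IH: "(\<delta>/K - 3)^(j-1) * \<delta> \<le> a j" "a (j-1) \<le> a j" using Suc by auto
    have r: "\<delta> * a j \<le> K*(a (j-1) + a j) + K*(a j + a (Suc j))" using rec Suc.prems False by simp
    have r2: "(\<delta>/K) * a j \<le> a (j-1) + 2 * a j + a (Suc j)"
    proof -
      have "(\<delta>/K) * a j = (\<delta> * a j) / K" by simp
      also have "\<dots> \<le> (K*(a (j-1) + a j) + K*(a j + a (Suc j))) / K"
        using r K by (simp add: divide_right_mono)
      also have "\<dots> = a (j-1) + 2 * a j + a (Suc j)" using K by (simp add: field_simps)
      finally show ?thesis .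
    qed
    have pos: "0 \<le> (\<delta>/K - 3)^(j-1) * \<delta>" using rho d1 by simp
    hence aj0: "0 \<le> a j" using IH by linarith
    have step: "(\<delta>/K - 3) * a j \<le> a (Suc j)"
      using r2 IH(2) by (simp add: algebra_simps)
    have "a j \<le> (\<delta>/K - 3) * a j" using aj0 rho by (simp add: mult_le_cancel_right1) 
    hence m: "a j \<le> a (Suc j)" using step by linarith
    obtain j' where j': "j = Suc j'" using False by (cases j) auto
    have "(\<delta>/K - 3)^j * \<delta> = (\<delta>/K - 3) * ((\<delta>/K - 3)^(j-1) * \<delta>)"
      unfolding j' by simp
    also have "\<dots> \<le> (\<delta>/K - 3) * a j" using IH(1) rho by (simp add: mult_left_mono)
    finally show ?thesis using step m by simp
  qed
qed

context bfs2 begin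

lemma expansion:
  fixes \<delta> :: real
  assumes dg: "\<forall>v\<in>S. \<delta> \<le> real (deg F S v)" and rho: "2 \<le> \<delta> / real (2*l-2) - 2" and d1: "1 \<le> \<delta>"
  shows "(\<delta>/real (2*l-2) - 3) ^ (l-1) * \<delta> \<le> real (card (Vl l))"
proof -
  define K where "K = real (2*l-2)"
  define a where "a j = real (card (Vl j))" for j
  have K: "K > 0" "2 \<le> K" unfolding K_def using l2 by auto
  have a0: "a 0 = 1" unfolding a_def Vl0 by simp
  have N1: "{w\<in>S. F x w} \<subseteq> Vl 1"
  proof
    fix w assume "w \<in> {w\<in>S. F x w}"
    hence w: "F x w" by simp
    have r: "rchd w" using edge_rchd(1)[OF rchd_x w] .
    have "lay w \<le> 1" using edge_rchd(2)[OF rchd_x w] lay_x by simp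
    moreover have "lay w \<noteq> 0" using lay0[OF r] w irr by auto
    ultimately show "w \<in> Vl 1" unfolding Vl_def using r by simp
  qed
  have "deg F S x \<le> card (Vl 1)" unfolding deg_def by (rule card_mono[OF fin_Vl N1])
  hence a1: "\<delta> \<le> a 1" unfolding a_def using dg xS by force
  have c0: "cross 0 \<le> card (Vl 1)"
  proof -
    have "cross 0 = up 0 x" unfolding cross_def Vl0 by simp
    also have "\<dots> \<le> card (Vl 1)" unfolding up_def by (rule card_mono[OF fin_Vl]) auto
    finally show ?thesis .
  qed
  have crossb: "real (cross i) \<le> K * (a i + a (Suc i))" if "i < l" for i
  proof (cases "i = 0")
    case True
    have "real (cross 0) \<le> a 1" using c0 unfolding a_def by simp
    also have "\<dots> \<le> 1 * (a 0 + a 1)" using a0 by simp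
    also have "\<dots> \<le> K * (a 0 + a 1)" by (rule mult_right_mono) (use K a0 a1 d1 in auto)
    finally show ?thesis using True by simp
  next
    case False
    have "cross i \<le> (2*l - 2) * (card (Vl i) + card (Vl (Suc i)))"
      using layer_bound[of i] False that by simp
    hence "real (cross i) \<le> real ((2*l - 2) * (card (Vl i) + card (Vl (Suc i))))" by (simp only: of_nat_le_iff)
    thus ?thesis unfolding K_def a_def by simp
  qed
  have rec: "\<forall>i. 1 \<le> i \<and> i < l \<longrightarrow> \<delta> * a i \<le> K*(a (i-1) + a i) + K*(a i + a (Suc i))"
  proof (intro allI impI)
    fix i assume i: "1 \<le> i \<and> i < l"
    then obtain j where j: "i = Suc j" by (cases i) auto
    have "\<delta> * a i = (\<Sum>v\<in>Vl i. \<delta>)" unfolding a_def by simp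
    also have "\<dots> \<le> (\<Sum>v\<in>Vl i. real (deg F S v))"
      by (rule sum_mono) (use dg Vl_S in blast)
    also have "\<dots> = (\<Sum>v\<in>Vl i. real (dn j v)) + (\<Sum>v\<in>Vl i. real (up i v))"
      using deg_split[of _ j] j by (simp add: sum.distrib)
    also have "\<dots> = real (cross j) + real (cross i)"
      using cross_dn[of j] j unfolding cross_def by simp
    also have "\<dots> \<le> K*(a j + a i) + K*(a i + a (Suc i))"
      using crossb[of j] crossb[of i] i j by simp
    finally show "\<delta> * a i \<le> K*(a (i-1) + a i) + K*(a i + a (Suc i))" using j by simp
  qed
  have "(\<delta>/K - 3)^(l-1) * \<delta> \<le> a l \<and> a (l-1) \<le> a l"
    by (rule grow[OF K(1) a0 a1 d1 rec]) (use rho l2 in \<open>auto simp: K_def\<close>)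
  thus ?thesis unfolding K_def a_def by simp
qed

end

lemma edge_bound:
  fixes n k :: nat and E :: "nat \<Rightarrow> nat \<Rightarrow> bool"
  assumes g: "graph_on n E" and nc: "\<not> contains_cycle n E (2*(k+1))" and k: "2 \<le> k"
    and q: "12 \<le> real n powr (1 / real (k+1))"
  shows "real (\<Sum>v\<in>{..<n}. deg E {..<n} v) \<le> 10 * real k * (real n powr (1/real (k+1))) * real n"
proof (rule ccontr)
  define l where "l = k + 1"
  define q where "q = real n powr (1 / real l)"
  assume "\<not> ?thesis"
  hence big: "real (\<Sum>v\<in>{..<n}. deg E {..<n} v) > 2 * (5 * real k * q) * real (card {..<n::nat})"
    unfolding q_def l_def by simp
  have symE: "\<forall>u w. E u w \<longrightarrow> E w u" and irrE: "\<forall>u. \<not> E u u" and rng: "\<And>u w. E u w \<Longrightarrow> u < n \<and> w < n"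
    using g unfolding graph_on_def by auto
  obtain W where W: "W \<subseteq> {..<n}" "W \<noteq> {}" "\<forall>v\<in>W. real (deg E W v) > 5 * real k * q"
    using dense_sub[OF _ symE irrE big] by auto
  have finW: "finite W" using W(1) finite_subset by blast
  obtain X where X: "\<forall>v\<in>W. deg E W v \<le> 2 * deg (cutR E X) W v"
    using max_cut[OF finW symE irrE] by blast
  define F where "F u w \<longleftrightarrow> u \<in> W \<and> w \<in> W \<and> cutR E X u w" for u w
  obtain x where xW: "x \<in> W" using W(2) by auto
  have degF: "deg F W v = deg (cutR E X) W v" if "v \<in> W" for v
    unfolding deg_def F_def using that by simp
  interpret B: bfs2 F x X W l
  proof
    show "F w u" if "F u w" for u w using that symE unfolding F_def cutR_def by auto
    show "(u \<in> X) = (w \<notin> X)" if "F u w" for u w using that unfolding F_def cutR_def by auto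
    show "finite W" by (rule finW)
    show "u \<in> W \<and> w \<in> W" if "F u w" for u w using that unfolding F_def by auto
    show "x \<in> W" by (rule xW)
    show "2 \<le> l" using k unfolding l_def by simp
    show "\<not> (\<exists>f. inj_on f {0..<2*l} \<and> (\<forall>p<2*l. F (f p) (f (Suc p mod (2*l)))))"
    proof
      assume "\<exists>f. inj_on f {0..<2*l} \<and> (\<forall>p<2*l. F (f p) (f (Suc p mod (2*l))))"
      then obtain f where f: "inj_on f {0..<2*l}" "\<forall>p<2*l. F (f p) (f (Suc p mod (2*l)))" by blast
      have "contains_cycle n E (2*(k+1))" unfolding contains_cycle_def
      proof (intro exI conjI)
        show "inj_on f {0..<2*(k+1)}" using f(1) unfolding l_def .
        show "f ` {0..<2*(k+1)} \<subseteq> {0..<n}"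
        proof
          fix y assume "y \<in> f ` {0..<2*(k+1)}"
          then obtain p where p: "p < 2*l" "y = f p" unfolding l_def by auto
          hence "f p \<in> W" using f(2) unfolding F_def by blast
          thus "y \<in> {0..<n}" using W(1) p by auto
        qed
        show "\<forall>i<2*(k+1). E (f i) (f (Suc i mod (2*(k+1))))"
          using f(2) unfolding F_def cutR_def l_def by blast
      qed
      thus False using nc by simp
    qed
  qed
  have n0: "0 < n" using W(1,2) by auto
  have q12: "12 \<le> q" using q unfolding q_def l_def by simp
  define \<delta> where "\<delta> = 5/2 * real k * q"
  have dg: "\<forall>v\<in>W. \<delta> \<le> real (deg F W v)"
  proof
    fix v assume v: "v \<in> W"
    have "5 * real k * q < real (deg E W v)" using W(3) v by blast
    also have "\<dots> \<le> 2 * real (deg F W v)"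
    proof -
      have "deg E W v \<le> 2 * deg F W v" using X v degF[OF v] by simp
      hence "real (deg E W v) \<le> real (2 * deg F W v)" by (simp only: of_nat_le_iff)
      thus ?thesis by simp
    qed
    finally show "\<delta> \<le> real (deg F W v)" unfolding \<delta>_def by simp
  qed
  have Kr: "real (2*l-2) = 2 * real k" unfolding l_def by simp
  have rr: "\<delta> / real (2*l-2) = 5/4 * q" unfolding Kr \<delta>_def using k by (simp add: field_simps)
  have exp: "(\<delta>/real (2*l-2) - 3) ^ (l-1) * \<delta> \<le> real (card (B.Vl l))"
  proof (rule B.expansion[OF dg])
    show "2 \<le> \<delta> / real (2*l-2) - 2" unfolding rr using q12 by simp
    have "1 * 1 \<le> real k * q" using mult_mono[of 1 "real k" 1 q] k q12 by simp
    thus "1 \<le> \<delta>" unfolding \<delta>_def by simp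
  qed
  have "card (B.Vl l) \<le> card W" by (rule card_mono[OF finW B.Vl_S])
  also have "card W \<le> n" using card_mono[OF _ W(1)] by simp
  finally have cn: "real (card (B.Vl l)) \<le> real n" by simp
  have b1: "q \<le> \<delta>/real (2*l-2) - 3" unfolding rr using q12 by simp
  have "q ^ (l-1) * q \<le> (\<delta>/real (2*l-2) - 3) ^ (l-1) * q"
    by (rule mult_right_mono[OF power_mono[OF b1]]) (use q12 in auto)
  also have "\<dots> < (\<delta>/real (2*l-2) - 3) ^ (l-1) * \<delta>"
  proof (rule mult_strict_left_mono)
    have "q * 1 < q * (5/2 * real k)" using q12 k by (intro mult_strict_left_mono) auto
    thus "q < \<delta>" unfolding \<delta>_def by (simp add: algebra_simps)
    show "0 < (\<delta>/real (2*l-2) - 3) ^ (l-1)" using b1 q12 by simp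
  qed
  finally have lt0: "q ^ (l-1) * q < (\<delta>/real (2*l-2) - 3) ^ (l-1) * \<delta>" .
  have lt1: "q ^ (l-1) * q < real n" using lt0 exp cn by linarith
  have "q ^ l = q ^ (l-1) * q" unfolding l_def by (simp add: mult.commute)
  hence lt: "q ^ l < real n" using lt1 by simp
  have "q ^ l = real n"
  proof -
    have "q ^ l = q powr real l" unfolding q_def by (simp add: powr_realpow n0)
    also have "\<dots> = real n powr (1 / real l * real l)" unfolding q_def by (simp add: powr_powr)
    also have "\<dots> = real n" unfolding l_def using n0 by simp
    finally show ?thesis .
  qed
  thus False using lt by simp
qed

lemma Kb_graph: "k \<le> n \<Longrightarrow> graph_on n (Kb n k)"
  unfolding graph_on_def Kb_def by auto

lemma Kb_nocycle:
  assumes m: "2*k+1 \<le> m"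
  shows "\<not> contains_cycle n (Kb n k) m"
proof
  assume "contains_cycle n (Kb n k) m"
  then obtain f where f: "inj_on f {0..<m}" "\<forall>i<m. Kb n k (f i) (f (Suc i mod m))"
    unfolding contains_cycle_def by blast
  define S where "S = {i\<in>{0..<m}. f i < k}"
  define T where "T = {i\<in>{0..<m}. f (Suc i mod m) < k}"
  have m0: "0 < m" using m by simp
  have cS: "card S \<le> k"
  proof -
    have "inj_on f S" using f(1) unfolding S_def by (rule inj_on_subset) auto
    hence "card S = card (f ` S)" by (simp add: card_image)
    also have "\<dots> \<le> card {..<k}" by (rule card_mono) (auto simp: S_def)
    finally show ?thesis by simp
  qed
  have cT: "card T \<le> card S"
  proof -
    have inj: "inj_on (\<lambda>i. Suc i mod m) T"
    proof (rule inj_onI)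
      fix i j assume "i \<in> T" "j \<in> T" "Suc i mod m = Suc j mod m"
      hence "(1 + i) mod m = (1 + j) mod m" "i < m" "j < m" unfolding T_def by auto
      thus "i = j" using mod_inj_range by blast
    qed
    have "(\<lambda>i. Suc i mod m) ` T \<subseteq> S" unfolding T_def S_def using m0 by auto
    thus ?thesis using card_inj_on_le[OF inj] by (simp add: S_def)
  qed
  have "{0..<m} \<subseteq> S \<union> T" using f(2) unfolding S_def T_def Kb_def by auto
  hence "card {0..<m} \<le> card (S \<union> T)" by (rule card_mono[rotated]) (simp add: S_def T_def)
  also have "\<dots> \<le> card S + card T" by (rule card_Un_le)
  finally show False using cS cT m by simp
qed

lemma perron_deg:
  assumes np: "normalized_perron n E v" and u: "u < n"
  shows "graph_spec_radius n E * v u \<le> real (deg E {..<n} u)"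
proof -
  have n0: "{0..<n} \<noteq> {}" using u by auto
  have le1: "v w \<le> 1" if "w < n" for w
  proof -
    have "v w \<le> Max (v ` {0..<n})" using that by (intro Max_ge) auto
    thus ?thesis using np unfolding normalized_perron_def by simp
  qed
  have "graph_spec_radius n E * v u = (\<Sum>w<n. if E u w then v w else 0)"
    using np u unfolding normalized_perron_def by simp
  also have "\<dots> \<le> (\<Sum>w<n. if E u w then 1 else 0)"
    by (rule sum_mono) (use le1 in auto)
  also have "\<dots> = real (card {w\<in>{..<n}. E u w})"
    by (simp add: sum.If_cases Int_def)
  finally show ?thesis unfolding deg_def .
qed

lemma count_bound:
  fixes Z c lam \<beta> :: real
  assumes np: "normalized_perron n E v" and b: "0 < \<beta>"
    and lamd: "lam = graph_spec_radius n E" and lpos: "0 < lam"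
    and P: "\<forall>u. P u \<longrightarrow> \<beta> \<le> v u"
    and sumdeg: "real (\<Sum>u\<in>{..<n}. deg E {..<n} u) \<le> Z * lam"
  shows "real (card {u. u < n \<and> P u}) \<le> Z / \<beta>"
proof -
  define A where "A = {u. u < n \<and> P u}"
  have finA: "finite A" unfolding A_def by simp
  have "real (card A) * (lam * \<beta>) = (\<Sum>u\<in>A. lam * \<beta>)" by simp
  also have "\<dots> \<le> (\<Sum>u\<in>A. lam * v u)"
    by (rule sum_mono) (use P lpos in \<open>auto simp: A_def\<close>)
  also have "\<dots> \<le> (\<Sum>u\<in>A. real (deg E {..<n} u))"
    by (rule sum_mono) (use perron_deg[OF np] lamd in \<open>auto simp: A_def\<close>)
  also have "\<dots> \<le> (\<Sum>u\<in>{..<n}. real (deg E {..<n} u))"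
    by (rule sum_mono2) (auto simp: A_def)
  also have "\<dots> \<le> Z * lam" using sumdeg by simp
  finally have "real (card A) * \<beta> * lam \<le> Z * lam" by (simp add: algebra_simps)
  hence "real (card A) * \<beta> \<le> Z" using lpos by simp
  thus ?thesis unfolding A_def using b by (simp add: field_simps)
qed

lemma key_ineq:
  fixes n k :: nat
  assumes k: "2 \<le> k" and n: "2*k \<le> n"
  shows "10 * real k * (real n powr (1/real (k+1))) * real n
     \<le> 16 * sqrt (real k) * real n powr ((real k + 3) / (2 * real k + 2)) * sqrt (real k * real (n-k))"
proof -
  have n0: "0 < real n" using k n by simp
  define g where "g = real n powr ((real k + 3) / (2 * real k + 2))"
  have e1: "real n powr (1/real (k+1)) * real n = g * sqrt (real n)"
  proof -
    have "real n powr (1/real (k+1)) * real n = real n powr (1/real (k+1)) * real n powr 1" using n0 by simp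
    also have "\<dots> = real n powr (1/real (k+1) + 1)" by (simp add: powr_add)
    also have "1/real (k+1) + 1 = (real k + 3) / (2 * real k + 2) + 1/2" by (simp add: field_simps)
    also have "real n powr ((real k + 3) / (2 * real k + 2) + 1/2) = g * real n powr (1/2)"
      unfolding g_def by (simp add: powr_add)
    also have "real n powr (1/2) = sqrt (real n)" using n0 by (simp add: powr_half_sqrt)
    finally show ?thesis .
  qed
  have e2: "10 * sqrt (real n) \<le> 16 * sqrt (real (n-k))"
  proof -
    have "10 * sqrt (real n) = sqrt (100 * real n)" by (simp add: real_sqrt_mult)
    also have "\<dots> \<le> sqrt (256 * real (n-k))" using n k by (intro real_sqrt_le_mono) (simp add: of_nat_diff)
    also have "\<dots> = 16 * sqrt (real (n-k))" by (simp add: real_sqrt_mult)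
    finally show ?thesis .
  qed
  have g0: "0 \<le> g" unfolding g_def by simp
  have "10 * real k * (real n powr (1/real (k+1))) * real n = real k * g * (10 * sqrt (real n))"
    using e1 by (simp add: algebra_simps)
  also have "\<dots> \<le> real k * g * (16 * sqrt (real (n-k)))"
    by (rule mult_left_mono[OF e2]) (use g0 in simp)
  also have "\<dots> = 16 * sqrt (real k) * g * (sqrt (real k) * sqrt (real (n-k)))"
    by (simp add: algebra_simps)
  also have "\<dots> = 16 * sqrt (real k) * g * sqrt (real k * real (n-k))" by (simp add: real_sqrt_mult)
  finally show ?thesis unfolding g_def .
qed

theorem mainTheorem4:
  fixes k :: nat and \<alpha> :: real
  assumes "k \<ge> 2" and "0 < \<alpha>" and "\<alpha> < 1"
  shows "\<exists>N. \<forall>n\<ge>N. \<forall>E v.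
    (E \<in> SPEX n {2*k+2} \<or> E \<in> SPEX n {2*k+1, 2*k+2}) \<and> normalized_perron n E v \<longrightarrow>
      real (card {u. u < n \<and> v u > \<alpha>}) \<le> 16 * sqrt (real k) * real n powr ((real k + 3) / (2 * real k + 2)) / \<alpha> \<and>
      real (card {u. u < n \<and> v u \<ge> \<alpha> / 3}) \<le> 48 * sqrt (real k) * real n powr ((real k + 3) / (2 * real k + 2)) / \<alpha>"
proof (intro exI[of _ "12^(k+1) + 2*k + 1"] allI impI)
  fix n E v
  assume nN: "12^(k+1) + 2*k + 1 \<le> n"
    and H: "(E \<in> SPEX n {2*k+2} \<or> E \<in> SPEX n {2*k+1, 2*k+2}) \<and> normalized_perron n E v"
  have k: "2 \<le> k" using assms by simp
  have n2k: "2*k \<le> n" "k < n" using nN by auto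
  have np: "normalized_perron n E v" using H by simp
  have gE: "graph_on n E" and ncE: "\<not> contains_cycle n E (2*(k+1))"
    and maxE: "graph_spec_radius n (Kb n k) \<le> graph_spec_radius n E"
  proof -
    have Kg: "graph_on n (Kb n k)" using n2k by (simp add: Kb_graph)
    have K1: "\<not> contains_cycle n (Kb n k) (2*k+2)" by (rule Kb_nocycle) simp
    have K2: "\<not> contains_cycle n (Kb n k) (2*k+1)" by (rule Kb_nocycle) simp
    have "graph_on n E \<and> \<not> contains_cycle n E (2*(k+1)) \<and> graph_spec_radius n (Kb n k) \<le> graph_spec_radius n E"
      using H
    proof (elim conjE disjE)
      assume "E \<in> SPEX n {2*k+2}"
      thus ?thesis using Kg K1 unfolding SPEX_def cycle_free_def by auto
    next
      assume "E \<in> SPEX n {2*k+1, 2*k+2}"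
      thus ?thesis using Kg K1 K2 unfolding SPEX_def cycle_free_def by auto
    qed
    thus "graph_on n E" "\<not> contains_cycle n E (2*(k+1))"
      "graph_spec_radius n (Kb n k) \<le> graph_spec_radius n E" by auto
  qed
  define lam where "lam = graph_spec_radius n E"
  have lamge: "sqrt (real k * real (n-k)) \<le> lam"
    using Kb_spec[of k n] maxE n2k k unfolding lam_def by simp
  have lpos: "0 < lam"
  proof -
    have "0 < real k * real (n-k)" using k n2k by simp
    thus ?thesis using lamge by (meson less_le_trans real_sqrt_gt_zero)
  qed
  have q12: "12 \<le> real n powr (1 / real (k+1))"
  proof -
    have "(12::real) = (12 ^ (k+1)) powr (1 / real (k+1))"
    proof -
      have "(12::real) ^ (k+1) = 12 powr real (k+1)" by (rule powr_realpow[symmetric]) simp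
      hence "((12::real) ^ (k+1)) powr (1 / real (k+1)) = 12 powr (real (k+1) * (1 / real (k+1)))"
        by (simp add: powr_powr)
      also have "\<dots> = 12" by simp
      finally show ?thesis by simp
    qed
    also have "\<dots> \<le> real n powr (1 / real (k+1))"
    proof (rule powr_mono2)
      have "real (12^(k+1)::nat) \<le> real n" using nN by linarith
      thus "(12::real) ^ (k+1) \<le> real n" by simp
    qed simp_all
    finally show ?thesis .
  qed
  have sd: "real (\<Sum>v\<in>{..<n}. deg E {..<n} v) \<le> 10 * real k * (real n powr (1/real (k+1))) * real n"
    by (rule edge_bound[OF gE ncE k q12])
  define Z where "Z = 16 * sqrt (real k) * real n powr ((real k + 3) / (2 * real k + 2))"
  have Z0: "0 \<le> Z" unfolding Z_def by simp
  have sdZ: "real (\<Sum>v\<in>{..<n}. deg E {..<n} v) \<le> Z * lam"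
  proof -
    have "real (\<Sum>v\<in>{..<n}. deg E {..<n} v) \<le> Z * sqrt (real k * real (n-k))"
      using sd key_ineq[OF k n2k(1)] unfolding Z_def by linarith
    also have "\<dots> \<le> Z * lam" by (rule mult_left_mono[OF lamge Z0])
    finally show ?thesis .
  qed
  have c1: "real (card {u. u < n \<and> v u > \<alpha>}) \<le> Z / \<alpha>"
    by (rule count_bound[OF np assms(2) lam_def lpos _ sdZ]) auto
  have c2: "real (card {u. u < n \<and> v u \<ge> \<alpha> / 3}) \<le> Z / (\<alpha> / 3)"
    by (rule count_bound[OF np _ lam_def lpos _ sdZ]) (use assms in auto)
  have "Z / (\<alpha> / 3) = 48 * sqrt (real k) * real n powr ((real k + 3) / (2 * real k + 2)) / \<alpha>"
    unfolding Z_def by (simp add: field_simps)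
  thus "real (card {u. u < n \<and> v u > \<alpha>}) \<le> 16 * sqrt (real k) * real n powr ((real k + 3) / (2 * real k + 2)) / \<alpha> \<and>
      real (card {u. u < n \<and> v u \<ge> \<alpha> / 3}) \<le> 48 * sqrt (real k) * real n powr ((real k + 3) / (2 * real k + 2)) / \<alpha>"
    using c1 c2 unfolding Z_def by simp
qed

end
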